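(* The maps $\mathfrak{F}_{\pm}$ are diffeomorphisms.
   Context: On the De Sitter–Kerr spacetime (Boyer–Lindquist coordinates $(t,r,\theta,\phi)$, $r\in(r_-,r_+)$), fix $r_0\in(r_-,r_+)$ and let $T(r)=\int_{r_0}^r\frac{\lambda(a^2+r^2)}{\Delta_r}dr$, $A(r)=\int_{r_0}^r\frac{\lambda a}{\Delta_r}dr$ (increasing homeomorphisms $(r_-,r_+)\to\mathbb{R}$). ${}^*$Kerr coordinates: $({}^*t,r,\theta,{}^*\phi)=(t-T(r),r,\theta,\phi-A(r))$; Kerr${}^*$ coordinates: $(t^*,r,\theta,\phi^* )=(t+T(r),r,\theta,\phi+A(r))$. The future horizons are $\mathfrak{H}^{future}_+=\mathbb{R}_{{}^*t}\times\{r_+\}\times\mathbb{S}^2$ and $\mathfrak{H}^{future}_-=\mathbb{R}_{t^*}\times\{r_-\}\times\mathbb{S}^2$, and $\Sigma_0=\{t=0\}$. Define $\mathfrak{F}_+:\Sigma_0\to\mathfrak{H}^{future}_+$, $(0,r,\theta,\phi)\mapsto(-T(r),r_+,\theta,\phi-A(r))_{{}^*\mathrm{Kerr}}$ (mapping the intersection of an outgoing principal null geodesic with $\Sigma_0$ to its intersection with $\mathfrak{H}^{future}_+$), and $\mathfrak{F}_-:\Sigma_0\to\mathfrak{H}^{future}_-$ similarly (along incoming principal null geodesics, in Kerr${}^*$ coordinates). *)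

theory Defs
  imports "HOL-Analysis.Analysis"
begin

definition DeltaR :: "real \<Rightarrow> real \<Rightarrow> real \<Rightarrow> real \<Rightarrow> real" where
  "DeltaR M a Lam r = (r\<^sup>2 + a\<^sup>2) * (1 - Lam * r\<^sup>2 / 3) - 2 * M * r"

definition lam :: "real \<Rightarrow> real \<Rightarrow> real" where
  "lam a Lam = 1 + Lam * a\<^sup>2 / 3"

text \<open>T(r) = int_{r0}^r lambda (a^2+r^2)/Delta_r dr, A(r) = int_{r0}^r lambda a/Delta_r dr
  (oriented interval integrals).\<close>

definition Tfun :: "real \<Rightarrow> real \<Rightarrow> real \<Rightarrow> real \<Rightarrow> real \<Rightarrow> real" where
  "Tfun M a Lam r0 r = (LBINT s=ereal r0..ereal r. lam a Lam * (a\<^sup>2 + s\<^sup>2) / DeltaR M a Lam s)"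

definition Afun :: "real \<Rightarrow> real \<Rightarrow> real \<Rightarrow> real \<Rightarrow> real \<Rightarrow> real" where
  "Afun M a Lam r0 r = (LBINT s=ereal r0..ereal r. lam a Lam * a / DeltaR M a Lam s)"

text \<open>S^2 is realised as the unit sphere in R^3, with the Boyer--Lindquist angles
  (theta, phi) as spherical coordinates about the third axis; the map phi |-> phi + alpha
  is the rotation by alpha about that axis.\<close>

definition rotz :: "real \<Rightarrow> real^3 \<Rightarrow> real^3" where
  "rotz \<alpha> x = vector [cos \<alpha> * x$1 - sin \<alpha> * x$2, sin \<alpha> * x$1 + cos \<alpha> * x$2, x$3]"

abbreviation S2 :: "(real^3) set" where
  "S2 \<equiv> sphere 0 1"

fun Ck_on :: "nat \<Rightarrow> 'a::euclidean_space set \<Rightarrow> ('a \<Rightarrow> 'b::euclidean_space) \<Rightarrow> bool" where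
  "Ck_on 0 U f = continuous_on U f"
| "Ck_on (Suc k) U f = (f differentiable_on U \<and>
      (\<forall>i\<in>Basis. Ck_on k U (\<lambda>x. frechet_derivative f (at x) i)))"

definition smooth_on :: "'a::euclidean_space set \<Rightarrow> ('a \<Rightarrow> 'b::euclidean_space) \<Rightarrow> bool" where
  "smooth_on U f \<longleftrightarrow> open U \<and> (\<forall>k. Ck_on k U f)"

definition smooth_map_on :: "'a::euclidean_space set \<Rightarrow> ('a \<Rightarrow> 'b::euclidean_space) \<Rightarrow> bool" where
  "smooth_map_on X f \<longleftrightarrow>
     (\<forall>x\<in>X. \<exists>U g. open U \<and> x \<in> U \<and> smooth_on U g \<and> (\<forall>y\<in>X \<inter> U. g y = f y))"

definition diffeomorphism_betw :: "'a::euclidean_space set \<Rightarrow> 'b::euclidean_space set \<Rightarrow> ('a \<Rightarrow> 'b) \<Rightarrow> bool" where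
  "diffeomorphism_betw X Y f \<longleftrightarrow>
     bij_betw f X Y \<and> smooth_map_on X f \<and> smooth_map_on Y (inv_into X f)"

text \<open>Sigma_0 = {t = 0}, parametrised by (r, omega) with r in (r_-, r_+) and omega in S^2.
  H_+^future = R_{*t} x {r_+} x S^2 parametrised by (*t, omega) in *Kerr coordinates;
  H_-^future = R_{t*} x {r_-} x S^2 parametrised by (t*, omega) in Kerr* coordinates.\<close>

definition Sigma0 :: "real \<Rightarrow> real \<Rightarrow> (real \<times> (real^3)) set" where
  "Sigma0 rm rp = {rm<..<rp} \<times> S2"

definition Horizon :: "(real \<times> (real^3)) set" where
  "Horizon = UNIV \<times> S2"

definition Fplus :: "real \<Rightarrow> real \<Rightarrow> real \<Rightarrow> real \<Rightarrow> real \<times> (real^3) \<Rightarrow> real \<times> (real^3)" where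
  "Fplus M a Lam r0 p = (- Tfun M a Lam r0 (fst p), rotz (- Afun M a Lam r0 (fst p)) (snd p))"

definition Fminus :: "real \<Rightarrow> real \<Rightarrow> real \<Rightarrow> real \<Rightarrow> real \<times> (real^3) \<Rightarrow> real \<times> (real^3)" where
  "Fminus M a Lam r0 p = (Tfun M a Lam r0 (fst p), rotz (Afun M a Lam r0 (fst p)) (snd p))"

end

theory Submission
  imports Defs
begin


datatype ex = Cn real | Vr | ID | IQ | Cs | Sn | Ad ex ex | Mu ex ex

fun ev :: "real \<Rightarrow> real \<Rightarrow> real \<Rightarrow> real \<Rightarrow> ex \<Rightarrow> real \<Rightarrow> real" where
  "ev M a Lam r0 (Cn c) r = c"
| "ev M a Lam r0 Vr r = r"
| "ev M a Lam r0 ID r = 1 / DeltaR M a Lam r"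
| "ev M a Lam r0 IQ r = 1 / (a\<^sup>2 + r\<^sup>2)"
| "ev M a Lam r0 Cs r = cos (Afun M a Lam r0 r)"
| "ev M a Lam r0 Sn r = sin (Afun M a Lam r0 r)"
| "ev M a Lam r0 (Ad e f) r = ev M a Lam r0 e r + ev M a Lam r0 f r"
| "ev M a Lam r0 (Mu e f) r = ev M a Lam r0 e r * ev M a Lam r0 f r"

definition dDel :: "real \<Rightarrow> real \<Rightarrow> real \<Rightarrow> ex" where
  "dDel M a Lam = Ad (Mu (Cn (2 - 2*Lam*a\<^sup>2/3)) Vr) (Ad (Mu (Cn (-4*Lam/3)) (Mu Vr (Mu Vr Vr))) (Cn (-2*M)))"

definition Del :: "real \<Rightarrow> real \<Rightarrow> real \<Rightarrow> ex" where
  "Del M a Lam = Ad (Mu (Ad (Mu Vr Vr) (Cn (a\<^sup>2))) (Ad (Cn 1) (Mu (Cn (-Lam/3)) (Mu Vr Vr)))) (Mu (Cn (-2*M)) Vr)"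

fun Dx :: "real \<Rightarrow> real \<Rightarrow> real \<Rightarrow> ex \<Rightarrow> ex" where
  "Dx M a Lam (Cn c) = Cn 0"
| "Dx M a Lam Vr = Cn 1"
| "Dx M a Lam ID = Mu (Cn (-1)) (Mu (dDel M a Lam) (Mu ID ID))"
| "Dx M a Lam IQ = Mu (Cn (-2)) (Mu Vr (Mu IQ IQ))"
| "Dx M a Lam Cs = Mu (Cn (-(lam a Lam * a))) (Mu Sn ID)"
| "Dx M a Lam Sn = Mu (Cn (lam a Lam * a)) (Mu Cs ID)"
| "Dx M a Lam (Ad e f) = Ad (Dx M a Lam e) (Dx M a Lam f)"
| "Dx M a Lam (Mu e f) = Ad (Mu (Dx M a Lam e) f) (Mu e (Dx M a Lam f))"

lemma ev_Del: "ev M a Lam r0 (Del M a Lam) r = DeltaR M a Lam r"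
  by (simp add: Del_def DeltaR_def power2_eq_square algebra_simps)

lemma DeltaR_deriv: "(DeltaR M a Lam has_real_derivative ev M a Lam r0 (dDel M a Lam) r) (at r)"
proof -
  have "((\<lambda>r. DeltaR M a Lam r) has_real_derivative
     (2*r) * (1 - Lam * r\<^sup>2 / 3) + (r\<^sup>2 + a\<^sup>2) * (- Lam * (2*r) / 3) - 2 * M) (at r)"
    unfolding DeltaR_def by (auto intro!: derivative_eq_intros)
  moreover have "(2*r) * (1 - Lam * r\<^sup>2 / 3) + (r\<^sup>2 + a\<^sup>2) * (- Lam * (2*r) / 3) - 2 * M
      = ev M a Lam r0 (dDel M a Lam) r"
    by (simp add: dDel_def power2_eq_square algebra_simps)
  ultimately show ?thesis by simp
qed

lemma FTC_open:
  fixes g :: "real \<Rightarrow> real"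
  assumes cont: "continuous_on {l<..<u} g" and r0: "l < r0" "r0 < u" and x: "l < x" "x < u"
  shows "((\<lambda>r. LBINT s=ereal r0..ereal r. g s) has_real_derivative g x) (at x)"
proof -
  define a0 where "a0 = (l + min r0 x)/2"
  define b0 where "b0 = (u + max r0 x)/2"
  have ab: "l < a0" "a0 < x" "x < b0" "b0 < u" "a0 \<le> r0" "r0 \<le> b0"
    using r0 x by (auto simp: a0_def b0_def)
  have "continuous_on {a0..b0} g"
    by (rule continuous_on_subset[OF cont]) (use ab in auto)
  from interval_integral_FTC2[OF ab(5,6) this, of x] ab
  have "((\<lambda>r. LBINT s=r0..r. g s) has_vector_derivative g x) (at x within {a0..b0})" by auto
  then have "((\<lambda>r. LBINT s=r0..r. g s) has_vector_derivative g x) (at x within {a0<..<b0})"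
    by (rule has_vector_derivative_within_subset) auto
  then have "((\<lambda>r. LBINT s=r0..r. g s) has_vector_derivative g x) (at x)"
    using ab by (subst (asm) has_vector_derivative_within_open) auto
  then show ?thesis by (simp add: has_real_derivative_iff_has_vector_derivative)
qed



definition dseq :: "real set \<Rightarrow> (nat \<Rightarrow> real \<Rightarrow> real) \<Rightarrow> bool" where
  "dseq I F \<longleftrightarrow> (\<forall>n. \<forall>x\<in>I. (F n has_real_derivative F (Suc n) x) (at x))"


definition frm :: "(real \<Rightarrow> real) \<Rightarrow> (3 \<Rightarrow> real \<Rightarrow> real) \<Rightarrow> (3 \<Rightarrow> 3 \<Rightarrow> real \<Rightarrow> real)
   \<Rightarrow> real \<times> (real^3) \<Rightarrow> real \<times> (real^3)" where
  "frm \<alpha> \<beta> \<gamma> x = (\<alpha> (fst x), (\<Sum>k\<in>UNIV. (\<beta> k (fst x) + (\<Sum>j\<in>UNIV. snd x $ j * \<gamma> k j (fst x))) *\<^sub>R axis k 1))"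

lemma hd_fst:
  assumes "(\<alpha> has_real_derivative d) (at (fst x))"
  shows "((\<lambda>x. \<alpha> (fst x)) has_derivative (\<lambda>h. fst h * d)) (at x)"
proof -
  have "((\<alpha> \<circ> fst) has_derivative ((*) d \<circ> fst)) (at x)"
    by (rule diff_chain_at[OF has_derivative_fst[OF has_derivative_ident]
          has_field_derivative_imp_has_derivative[OF assms]])
  then show ?thesis by (simp add: o_def mult.commute)
qed

lemma hd_nth:
  "((\<lambda>x::real \<times> (real^3). snd x $ j) has_derivative (\<lambda>h. snd h $ j)) (at x)"
proof -
  have "bounded_linear (\<lambda>h::real \<times> (real^3). snd h $ j)"
    using bounded_linear_compose[OF bounded_linear_vec_nth[of j] bounded_linear_snd] by (simp add: o_def)
  then show ?thesis by (rule bounded_linear_imp_has_derivative)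
qed

lemma frm_deriv:
  assumes "(\<alpha> has_real_derivative \<alpha>') (at r)"
    and "\<And>k. (\<beta> k has_real_derivative \<beta>' k) (at r)"
    and "\<And>k j. (\<gamma> k j has_real_derivative \<gamma>' k j) (at r)"
  shows "(frm \<alpha> \<beta> \<gamma> has_derivative (\<lambda>h. (fst h * \<alpha>',
     (\<Sum>k\<in>UNIV. (fst h * \<beta>' k + (\<Sum>j\<in>UNIV. snd h $ j * \<gamma> k j r + \<omega> $ j * (fst h * \<gamma>' k j))) *\<^sub>R axis k 1))))
     (at (r, \<omega>))"
proof -
  let ?x = "(r, \<omega>)"
  have a: "((\<lambda>x. \<alpha> (fst x)) has_derivative (\<lambda>h. fst h * \<alpha>')) (at ?x)"
    using hd_fst[of \<alpha> \<alpha>' ?x] assms(1) by simp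
  have b: "((\<lambda>x. \<beta> k (fst x)) has_derivative (\<lambda>h. fst h * \<beta>' k)) (at ?x)" for k
    using hd_fst[of "\<beta> k" "\<beta>' k" ?x] assms(2) by simp
  have c: "((\<lambda>x. \<gamma> k j (fst x)) has_derivative (\<lambda>h. fst h * \<gamma>' k j)) (at ?x)" for k j
    using hd_fst[of "\<gamma> k j" "\<gamma>' k j" ?x] assms(3) by simp
  have d: "((\<lambda>x. snd x $ j * \<gamma> k j (fst x)) has_derivative
       (\<lambda>h. snd h $ j * \<gamma> k j r + \<omega> $ j * (fst h * \<gamma>' k j))) (at ?x)" for k j
    using has_derivative_mult[OF hd_nth[of j ?x] c[of k j]] by (simp add: add.commute)
  have e: "((\<lambda>x. (\<beta> k (fst x) + (\<Sum>j\<in>UNIV. snd x $ j * \<gamma> k j (fst x))) *\<^sub>R axis k (1::real)) has_derivative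
      (\<lambda>h. (fst h * \<beta>' k + (\<Sum>j\<in>UNIV. snd h $ j * \<gamma> k j r + \<omega> $ j * (fst h * \<gamma>' k j))) *\<^sub>R axis k 1)) (at ?x)" for k
    by (intro has_derivative_scaleR_left has_derivative_add b has_derivative_sum d)
  have f: "((\<lambda>x. \<Sum>k\<in>UNIV. (\<beta> k (fst x) + (\<Sum>j\<in>UNIV. snd x $ j * \<gamma> k j (fst x))) *\<^sub>R axis k (1::real)) has_derivative
      (\<lambda>h. \<Sum>k\<in>UNIV. (fst h * \<beta>' k + (\<Sum>j\<in>UNIV. snd h $ j * \<gamma> k j r + \<omega> $ j * (fst h * \<gamma>' k j))) *\<^sub>R axis k 1)) (at ?x)"
    by (intro has_derivative_sum e)
  show ?thesis unfolding frm_def[abs_def]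
    by (rule has_derivative_Pair[OF a f])
qed


definition PC :: "real set \<Rightarrow> (real \<times> (real^3) \<Rightarrow> real \<times> (real^3)) \<Rightarrow> bool" where
  "PC I f \<longleftrightarrow> (\<exists>A B C. dseq I A \<and> (\<forall>k. dseq I (B k)) \<and> (\<forall>k j. dseq I (C k j)) \<and>
     (\<forall>x\<in>I \<times> UNIV. f x = frm (A 0) (\<lambda>k. B k 0) (\<lambda>k j. C k j 0) x))"

lemma dseq_zero: "dseq I (\<lambda>n x. 0)"
  unfolding dseq_def by simp

lemma dseq_shift: "dseq I A \<Longrightarrow> dseq I (\<lambda>n. A (Suc n))"
  unfolding dseq_def by simp

lemma axis_sum: "(\<Sum>j\<in>UNIV. axis m (1::real) $ j * c j) = c (m::3)"
proof -
  have "(\<Sum>j\<in>UNIV. axis m (1::real) $ j * c j) = (\<Sum>j\<in>UNIV. if j = m then c j else 0)"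
    by (rule sum.cong) (auto simp: axis_def)
  then show ?thesis by simp
qed

lemma PC_step:
  assumes oI: "open I" and P: "PC I f"
  shows "f differentiable_on (I \<times> UNIV)" and "\<forall>i\<in>Basis. PC I (\<lambda>x. frechet_derivative f (at x) i)"
proof -
  obtain A B C where A: "dseq I A" and B: "\<And>k. dseq I (B k)" and C: "\<And>k j. dseq I (C k j)"
    and fe: "\<forall>x\<in>I \<times> UNIV. f x = frm (A 0) (\<lambda>k. B k 0) (\<lambda>k j. C k j 0) x"
    using P unfolding PC_def by blast
  define D where "D x = (\<lambda>h. (fst h * A 1 (fst x),
     (\<Sum>k\<in>UNIV. (fst h * B k 1 (fst x) + (\<Sum>j\<in>UNIV. snd h $ j * C k j 0 (fst x) + snd x $ j * (fst h * C k j 1 (fst x)))) *\<^sub>R axis k (1::real))))" for x :: "real \<times> (real^3)"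
  have oU: "open (I \<times> (UNIV :: (real^3) set))" using oI by (intro open_Times) auto
  have hd: "(f has_derivative D x) (at x)" if x: "x \<in> I \<times> UNIV" for x
  proof -
    obtain r \<omega> where xe: "x = (r, \<omega>)" by (cases x)
    have r: "r \<in> I" using x xe by auto
    have "(frm (A 0) (\<lambda>k. B k 0) (\<lambda>k j. C k j 0) has_derivative D x) (at x)"
      unfolding xe D_def fst_conv snd_conv
      by (rule frm_deriv) (use A B C r in \<open>auto simp: dseq_def\<close>)
    then show ?thesis
      by (rule has_derivative_transform_within_open[OF _ oU x]) (use fe in auto)
  qed
  have fd: "frechet_derivative f (at x) = D x" if "x \<in> I \<times> UNIV" for x
    using frechet_derivative_at[OF hd[OF that]] by simp
  show "f differentiable_on (I \<times> UNIV)"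
    unfolding differentiable_on_def differentiable_def
    using hd by (blast intro: has_derivative_at_withinI)
  show "\<forall>i\<in>Basis. PC I (\<lambda>x. frechet_derivative f (at x) i)"
  proof
    fix i :: "real \<times> (real^3)" assume i: "i \<in> Basis"
    then consider "i = (1, 0)" | m where "i = (0, axis m 1)"
      unfolding Basis_prod_def Basis_vec_def by auto
    then show "PC I (\<lambda>x. frechet_derivative f (at x) i)"
    proof cases
      case 1
      show ?thesis unfolding PC_def
      proof (intro exI conjI allI)
        show "dseq I (\<lambda>n. A (Suc n))" by (rule dseq_shift[OF A])
        show "dseq I (\<lambda>n. B k (Suc n))" for k by (rule dseq_shift[OF B])
        show "dseq I (\<lambda>n. C k j (Suc n))" for k j by (rule dseq_shift[OF C])
        show "\<forall>x\<in>I \<times> UNIV. frechet_derivative f (at x) i =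
          frm (A (Suc 0)) (\<lambda>k. B k (Suc 0)) (\<lambda>k j. C k j (Suc 0)) x"
          using fd by (simp add: 1 D_def frm_def)
      qed
    next
      case 2
      show ?thesis unfolding PC_def
      proof (intro exI conjI allI)
        show "dseq I (\<lambda>n x. 0)" by (rule dseq_zero)
        show "dseq I (C k m)" for k by (rule C)
        show "dseq I (\<lambda>n x. 0)" for k j :: 3 by (rule dseq_zero)
        show "\<forall>x\<in>I \<times> UNIV. frechet_derivative f (at x) i =
          frm (\<lambda>x. 0) (\<lambda>k. C k m 0) (\<lambda>k j. \<lambda>x. 0) x"
          using fd by (simp add: 2 D_def frm_def axis_sum)
      qed
    qed
  qed
qed

lemma PC_smooth:
  assumes oI: "open I" and P: "PC I f"
  shows "smooth_on (I \<times> UNIV) f"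
proof -
  have "\<forall>f. PC I f \<longrightarrow> Ck_on k (I \<times> UNIV) f" for k
  proof (induction k)
    case 0
    then show ?case using PC_step(1)[OF oI] by (auto intro: differentiable_imp_continuous_on)
  next
    case (Suc k)
    then show ?case using PC_step[OF oI] by auto
  qed
  moreover have "open (I \<times> (UNIV :: (real^3) set))" using oI by (intro open_Times) auto
  ultimately show ?thesis using P unfolding smooth_on_def by auto
qed


definition tauf :: "real \<Rightarrow> real \<Rightarrow> real \<Rightarrow> real \<Rightarrow> real \<Rightarrow> real \<Rightarrow> real \<Rightarrow> real" where
  "tauf M a Lam rm rp r0 t = (THE r. r \<in> {rm<..<rp} \<and> Tfun M a Lam r0 r = t)"

definition entP :: "3 \<Rightarrow> 3 \<Rightarrow> ex" where
  "entP k j = (if k = 1 then (if j = 1 then Cs else if j = 2 then Mu (Cn (-1)) Sn else Cn 0)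
     else if k = 2 then (if j = 1 then Sn else if j = 2 then Cs else Cn 0)
     else (if j = 3 then Cn 1 else Cn 0))"

definition entM :: "3 \<Rightarrow> 3 \<Rightarrow> ex" where
  "entM k j = (if k = 1 then (if j = 1 then Cs else if j = 2 then Sn else Cn 0)
     else if k = 2 then (if j = 1 then Mu (Cn (-1)) Sn else if j = 2 then Cs else Cn 0)
     else (if j = 3 then Cn 1 else Cn 0))"

lemma sum_axis3: "(\<Sum>k\<in>(UNIV::3 set). c k *\<^sub>R axis k (1::real)) = vector [c 1, c 2, c 3]"
  by (simp add: vec_eq_iff forall_3 sum_3 axis_def)

lemma rotz_entP: "rotz (Afun M a Lam r0 r) \<omega> =
   (\<Sum>k\<in>UNIV. (0 + (\<Sum>j\<in>UNIV. \<omega> $ j * ev M a Lam r0 (entP k j) r)) *\<^sub>R axis k 1)"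
  unfolding sum_axis3 by (simp add: rotz_def sum_3 entP_def algebra_simps)

lemma rotz_entM: "rotz (- Afun M a Lam r0 r) \<omega> =
   (\<Sum>k\<in>UNIV. (0 + (\<Sum>j\<in>UNIV. \<omega> $ j * ev M a Lam r0 (entM k j) r)) *\<^sub>R axis k 1)"
  unfolding sum_axis3 by (simp add: rotz_def sum_3 entM_def algebra_simps)

lemma trig1: "cos \<alpha> * (cos \<alpha> * y) + sin \<alpha> * (sin \<alpha> * y) = (y::real)"
proof -
  have "cos \<alpha> * (cos \<alpha> * y) + sin \<alpha> * (sin \<alpha> * y) = (cos \<alpha> * cos \<alpha> + sin \<alpha> * sin \<alpha>) * y"
    by (simp only: distrib_right mult.assoc)
  also have "\<dots> = y" by (simp only: sin_cos_squared_add3 mult_1_left)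
  finally show ?thesis .
qed

lemma trig1b: "cos \<alpha> * (cos \<alpha> * y) + (sin \<alpha> * (sin \<alpha> * y) + z) = (y::real) + z"
  using trig1[of \<alpha> y] by linarith

lemma rotz_inv1: "rotz \<alpha> (rotz (-\<alpha>) x) = x"
  unfolding rotz_def by (simp add: vec_eq_iff forall_3 algebra_simps trig1)

lemma rotz_inv2: "rotz (-\<alpha>) (rotz \<alpha> x) = x"
  using rotz_inv1[of "-\<alpha>" x] by simp

lemma rotz_inner: "inner (rotz \<alpha> x) (rotz \<alpha> x) = inner x x"
  unfolding rotz_def inner_vec_def by (simp add: sum_3 algebra_simps trig1 trig1b)

lemma rotz_norm: "norm (rotz \<alpha> x) = norm x"
  using rotz_inner[of \<alpha> x] by (simp add: norm_eq_sqrt_inner)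

lemma PC_smooth_map:
  assumes "open I" "PC I g" "X \<subseteq> I \<times> UNIV" "\<forall>y\<in>X. g y = f y"
  shows "smooth_map_on X f"
  unfolding smooth_map_on_def
proof
  fix x assume "x \<in> X"
  then show "\<exists>U g. open U \<and> x \<in> U \<and> smooth_on U g \<and> (\<forall>y\<in>X \<inter> U. g y = f y)"
    using assms PC_smooth[OF assms(1,2)] by (intro exI[of _ "I \<times> UNIV"] exI[of _ g]) (auto intro: open_Times)
qed



lemma ring1: "((x::real) - p) * ((x+p)*(1 - c*Q) - 2*M) = (p - x) * (2*M - (x+p) + (x+p)*c*Q)" by algebra
lemma ring2: "((x::real) - p) * ((x+p)*(1 - c*Q) - 2*M) = (x - p) * ((x+p) - (x+p)*c*Q - 2*M)" by algebra


context
  fixes M a Lam rm rp r0 :: real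
  assumes Lp: "Lam > 0" and Mp: "M > 0" and rmp: "0 < rm" and rmrp: "rm < rp"
    and Dm: "DeltaR M a Lam rm = 0" and Dp: "DeltaR M a Lam rp = 0"
    and Dpos: "\<forall>r\<in>{rm<..<rp}. DeltaR M a Lam r > 0" and r0I: "r0 \<in> {rm<..<rp}"
begin

lemma lam_ge1: "lam a Lam \<ge> 1"
  using Lp by (simp add: lam_def)

lemma DeltaR_cont: "continuous_on S (DeltaR M a Lam)"
proof -
  have "continuous_on S (\<lambda>r. DeltaR M a Lam r)"
    unfolding DeltaR_def by (intro continuous_intros) auto
  then show ?thesis by simp
qed

lemma T_deriv:
  assumes "x \<in> {rm<..<rp}"
  shows "(Tfun M a Lam r0 has_real_derivative lam a Lam * (a\<^sup>2 + x\<^sup>2) / DeltaR M a Lam x) (at x)"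
proof -
  have e: "Tfun M a Lam r0 = (\<lambda>r. LBINT s=ereal r0..ereal r. lam a Lam * (a\<^sup>2 + s\<^sup>2) / DeltaR M a Lam s)"
    by (simp add: fun_eq_iff Tfun_def)
  have c: "continuous_on {rm<..<rp} (\<lambda>s. lam a Lam * (a\<^sup>2 + s\<^sup>2) / DeltaR M a Lam s)"
    using Dpos by (intro continuous_on_divide continuous_intros DeltaR_cont) auto
  show ?thesis unfolding e
    by (rule FTC_open[OF c]) (use r0I assms in auto)
qed

lemma A_deriv:
  assumes "x \<in> {rm<..<rp}"
  shows "(Afun M a Lam r0 has_real_derivative lam a Lam * a / DeltaR M a Lam x) (at x)"
proof -
  have e: "Afun M a Lam r0 = (\<lambda>r. LBINT s=ereal r0..ereal r. lam a Lam * a / DeltaR M a Lam s)"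
    by (simp add: fun_eq_iff Afun_def)
  have c: "continuous_on {rm<..<rp} (\<lambda>s. lam a Lam * a / DeltaR M a Lam s)"
    using Dpos by (intro continuous_on_divide continuous_intros DeltaR_cont) auto
  show ?thesis unfolding e
    by (rule FTC_open[OF c]) (use r0I assms in auto)
qed

lemma ev_deriv:
  assumes x: "x \<in> {rm<..<rp}"
  shows "((\<lambda>r. ev M a Lam r0 e r) has_real_derivative ev M a Lam r0 (Dx M a Lam e) x) (at x)"
proof (induction e)
  case (Cn c) then show ?case by simp
next
  case Vr then show ?case by simp
next
  case ID
  have "DeltaR M a Lam x > 0" using Dpos x by blast
  then have d: "DeltaR M a Lam x \<noteq> 0" by simp
  have "((\<lambda>r. 1 / DeltaR M a Lam r) has_real_derivative
      (0 * DeltaR M a Lam x - 1 * ev M a Lam r0 (dDel M a Lam) x) / (DeltaR M a Lam x * DeltaR M a Lam x)) (at x)"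
    by (rule DERIV_divide[OF DERIV_const DeltaR_deriv d])
  then show ?case by (simp add: field_simps)
next
  case IQ
  have d: "a\<^sup>2 + x\<^sup>2 \<noteq> 0" using rmp x by (auto simp: add_nonneg_pos)
  have dd: "((\<lambda>r. a\<^sup>2 + r\<^sup>2) has_real_derivative 2 * x) (at x)"
    by (auto intro!: derivative_eq_intros)
  have "((\<lambda>r. 1 / (a\<^sup>2 + r\<^sup>2)) has_real_derivative
      (0 * (a\<^sup>2 + x\<^sup>2) - 1 * (2 * x)) / ((a\<^sup>2 + x\<^sup>2) * (a\<^sup>2 + x\<^sup>2))) (at x)"
    by (rule DERIV_divide[OF DERIV_const dd d])
  then show ?case by (simp add: field_simps)
next
  case Cs
  have "((\<lambda>r. cos (Afun M a Lam r0 r)) has_real_derivative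
     - sin (Afun M a Lam r0 x) * (lam a Lam * a / DeltaR M a Lam x)) (at x)"
    by (rule DERIV_fun_cos[OF A_deriv[OF x]])
  then show ?case by (simp add: mult_ac)
next
  case Sn
  have "((\<lambda>r. sin (Afun M a Lam r0 r)) has_real_derivative
     cos (Afun M a Lam r0 x) * (lam a Lam * a / DeltaR M a Lam x)) (at x)"
    by (rule DERIV_fun_sin[OF A_deriv[OF x]])
  then show ?case by (simp add: mult_ac)
next
  case (Ad e f) then show ?case by (auto intro!: DERIV_add)
next
  case (Mu e f) then show ?case by (auto intro!: derivative_eq_intros)
qed

lemma dseq_ev: "dseq {rm<..<rp} (\<lambda>n. ev M a Lam r0 ((Dx M a Lam ^^ n) e))"
  unfolding dseq_def using ev_deriv by auto


lemma T_pos_deriv: "x \<in> {rm<..<rp} \<Longrightarrow> lam a Lam * (a\<^sup>2 + x\<^sup>2) / DeltaR M a Lam x > 0"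
proof -
  assume x: "x \<in> {rm<..<rp}"
  have "DeltaR M a Lam x > 0" using Dpos x by blast
  moreover have "lam a Lam > 0" using lam_ge1 by simp
  moreover have "a\<^sup>2 + x\<^sup>2 > 0" using x rmp by (auto simp: add_nonneg_pos)
  ultimately show ?thesis by simp
qed

lemma T_strict: assumes "x \<in> {rm<..<rp}" "y \<in> {rm<..<rp}" "x < y" shows "Tfun M a Lam r0 x < Tfun M a Lam r0 y"
proof (rule DERIV_pos_imp_increasing[of x y "Tfun M a Lam r0"])
  show "x < y" by fact
  fix z assume "x \<le> z" "z \<le> y"
  with assms have "z \<in> {rm<..<rp}" by auto
  then show "\<exists>y. (Tfun M a Lam r0 has_real_derivative y) (at z) \<and> 0 < y"
    using T_deriv T_pos_deriv by blast
qed

lemma T_inj: "inj_on (Tfun M a Lam r0) {rm<..<rp}"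
proof (rule linorder_inj_onI')
  fix x y assume "x \<in> {rm<..<rp}" "y \<in> {rm<..<rp}" "x < y"
  with T_strict[of x y] show "Tfun M a Lam r0 x \<noteq> Tfun M a Lam r0 y" by simp
qed

lemma T_isCont: "x \<in> {rm<..<rp} \<Longrightarrow> isCont (Tfun M a Lam r0) x"
  using T_deriv DERIV_isCont by blast

lemma lowerQ: "x \<in> {rm<..<rp} \<Longrightarrow> rm\<^sup>2 \<le> lam a Lam * (a\<^sup>2 + x\<^sup>2)"
proof -
  assume x: "x \<in> {rm<..<rp}"
  have "rm\<^sup>2 \<le> x\<^sup>2" using x rmp by (auto intro!: power_mono)
  also have "\<dots> \<le> a\<^sup>2 + x\<^sup>2" by simp
  also have "\<dots> \<le> lam a Lam * (a\<^sup>2 + x\<^sup>2)" using lam_ge1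
    by (metis mult_le_cancel_right1 add_nonneg_nonneg zero_le_power2 not_le)
  finally show ?thesis .
qed

definition "Cp = 2*M + 2*rp*(Lam/3)*(2*rp\<^sup>2+a\<^sup>2)"

lemma Cp_pos: "Cp > 0"
  unfolding Cp_def using Mp Lp rmp rmrp by (intro add_pos_nonneg) (auto intro!: mult_nonneg_nonneg)

lemma D_up: assumes x: "x \<in> {rm<..<rp}" shows "DeltaR M a Lam x \<le> Cp * (rp - x)"
proof -
  have id0: "DeltaR M a Lam x - DeltaR M a Lam rp = (x - rp) * ((x+rp)*(1 - Lam/3*(x\<^sup>2+rp\<^sup>2+a\<^sup>2)) - 2*M)"
    unfolding DeltaR_def by (simp add: power2_eq_square field_simps)
  have id: "DeltaR M a Lam x = (rp - x) * (2*M - (x+rp) + (x+rp)*(Lam/3)*(x\<^sup>2+rp\<^sup>2+a\<^sup>2))"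
  proof -
    have "DeltaR M a Lam x = (x - rp) * ((x+rp)*(1 - Lam/3*(x\<^sup>2+rp\<^sup>2+a\<^sup>2)) - 2*M)"
      using id0 Dp by simp
    also have "\<dots> = (rp - x) * (2*M - (x+rp) + (x+rp)*(Lam/3)*(x\<^sup>2+rp\<^sup>2+a\<^sup>2))"
      by (rule ring1)
    finally show ?thesis .
  qed
  have "(x+rp)*(Lam/3)*(x\<^sup>2+rp\<^sup>2+a\<^sup>2) \<le> (2*rp)*(Lam/3)*(2*rp\<^sup>2+a\<^sup>2)"
  proof -
    have "x\<^sup>2 \<le> rp\<^sup>2" using x rmp by (auto intro!: power_mono)
    then have f2: "(Lam/3)*(x\<^sup>2+rp\<^sup>2+a\<^sup>2) \<le> (Lam/3)*(2*rp\<^sup>2+a\<^sup>2)" using Lp by (auto intro!: mult_left_mono)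
    have f1: "x + rp \<le> 2*rp" and f3: "0 \<le> 2*rp" using x rmp by auto
    have f4: "0 \<le> (Lam/3)*(x\<^sup>2+rp\<^sup>2+a\<^sup>2)" using Lp by auto
    have "(x+rp)*((Lam/3)*(x\<^sup>2+rp\<^sup>2+a\<^sup>2)) \<le> (2*rp)*((Lam/3)*(2*rp\<^sup>2+a\<^sup>2))"
      by (rule mult_mono[OF f1 f2 f3 f4])
    then show ?thesis by (simp add: mult.assoc)
  qed
  moreover have "0 < x + rp" using x rmp by auto
  ultimately have "2*M - (x+rp) + (x+rp)*(Lam/3)*(x\<^sup>2+rp\<^sup>2+a\<^sup>2) \<le> Cp" unfolding Cp_def by linarith
  moreover have "rp - x > 0" using x by auto
  ultimately show ?thesis unfolding id by (simp add: mult.commute)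
qed

lemma D_low: assumes x: "x \<in> {rm<..<rp}" shows "DeltaR M a Lam x \<le> (2*rp) * (x - rm)"
proof -
  have id0: "DeltaR M a Lam x - DeltaR M a Lam rm = (x - rm) * ((x+rm)*(1 - Lam/3*(x\<^sup>2+rm\<^sup>2+a\<^sup>2)) - 2*M)"
    unfolding DeltaR_def by (simp add: power2_eq_square field_simps)
  have id: "DeltaR M a Lam x = (x - rm) * ((x+rm) - (x+rm)*(Lam/3)*(x\<^sup>2+rm\<^sup>2+a\<^sup>2) - 2*M)"
  proof -
    have "DeltaR M a Lam x = (x - rm) * ((x+rm)*(1 - Lam/3*(x\<^sup>2+rm\<^sup>2+a\<^sup>2)) - 2*M)"
      using id0 Dm by simp
    also have "\<dots> = (x - rm) * ((x+rm) - (x+rm)*(Lam/3)*(x\<^sup>2+rm\<^sup>2+a\<^sup>2) - 2*M)"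
      by (rule ring2)
    finally show ?thesis .
  qed
  have "0 \<le> (x+rm)*(Lam/3)*(x\<^sup>2+rm\<^sup>2+a\<^sup>2)" using x rmp Lp by auto
  then have "(x+rm) - (x+rm)*(Lam/3)*(x\<^sup>2+rm\<^sup>2+a\<^sup>2) - 2*M \<le> 2*rp" using x Mp by auto
  moreover have "x - rm > 0" using x by auto
  ultimately show ?thesis unfolding id by (simp add: mult.commute)
qed

lemma T_surj: "\<exists>r\<in>{rm<..<rp}. Tfun M a Lam r0 r = t"
proof (cases "t \<ge> Tfun M a Lam r0 r0")
  case True
  define T where "T = Tfun M a Lam r0"
  define K where "K = rm\<^sup>2 / Cp"
  have Kp: "K > 0" using Cp_pos rmp by (simp add: K_def)
  define E where "E = exp (-(t - T r0)/K)"
  define r1 where "r1 = rp - (rp - r0) * E"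
  have "-(t - T r0)/K \<le> 0" using True Kp by (auto simp: T_def intro!: divide_nonpos_pos)
  then have e1: "E \<le> 1" "E > 0" by (auto simp: E_def)
  have "(rp - r0) * E \<le> (rp - r0)" "(rp - r0) * E > 0" using e1 r0I by (auto intro!: mult_left_le)
  then have r1: "r0 \<le> r1" "r1 < rp" using r0I by (auto simp: r1_def)
  have "ln (rp - r1) = ln ((rp - r0) * E)" by (simp add: r1_def)
  also have "\<dots> = ln (rp - r0) + ln E" using e1 r0I by (simp add: ln_mult)
  also have "\<dots> = ln (rp - r0) - (t - T r0)/K" by (simp add: E_def minus_divide_left)
  finally have ln1: "ln (rp - r1) = ln (rp - r0) - (t - T r0)/K" .
  define h where "h s = T s + K * ln (rp - s)" for s
  have "h r0 \<le> h r1"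
  proof (rule DERIV_nonneg_imp_increasing_open[OF r1(1)])
    fix x assume x: "r0 < x" "x < r1"
    then have xI: "x \<in> {rm<..<rp}" using r0I r1 by auto
    have "(h has_real_derivative (lam a Lam * (a\<^sup>2 + x\<^sup>2) / DeltaR M a Lam x + K * (-1 / (rp - x)))) (at x)"
      unfolding h_def[abs_def] T_def using xI
      by (auto intro!: derivative_eq_intros T_deriv)
    moreover have "K / (rp - x) \<le> lam a Lam * (a\<^sup>2 + x\<^sup>2) / DeltaR M a Lam x"
    proof -
      have Dx: "DeltaR M a Lam x > 0" using Dpos xI by blast
      have "K / (rp - x) = rm\<^sup>2 / (Cp * (rp - x))" by (simp add: K_def)
      also have "\<dots> \<le> rm\<^sup>2 / DeltaR M a Lam x"
        using D_up[OF xI] Dx by (intro divide_left_mono) auto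
      also have "\<dots> \<le> lam a Lam * (a\<^sup>2 + x\<^sup>2) / DeltaR M a Lam x"
        using lowerQ[OF xI] Dx by (intro divide_right_mono) auto
      finally show ?thesis .
    qed
    ultimately show "\<exists>y. (h has_real_derivative y) (at x) \<and> 0 \<le> y" by (intro exI[of _ "lam a Lam * (a\<^sup>2 + x\<^sup>2) / DeltaR M a Lam x - K / (rp - x)"]) auto
  next
    have "\<forall>x\<in>{r0..r1}. isCont h x"
    proof
      fix x assume "x \<in> {r0..r1}"
      then have xI: "x \<in> {rm<..<rp}" and "x < rp" using r0I r1 by auto
      then show "isCont h x" unfolding h_def[abs_def] T_def
        by (auto intro!: continuous_intros T_isCont)
    qed
    then show "continuous_on {r0..r1} h" by (rule continuous_at_imp_continuous_on)
  qed
  then have "T r0 + K * ln (rp - r0) \<le> T r1 + K * (ln (rp - r0) - (t - T r0)/K)" unfolding h_def ln1 .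
  moreover have "K * (ln (rp - r0) - (t - T r0)/K) = K * ln (rp - r0) - (t - T r0)"
    using Kp by (simp add: field_simps)
  ultimately have "t \<le> T r1" by linarith
  moreover have "T r0 \<le> t" using True by (simp add: T_def)
  moreover have "\<forall>x. r0 \<le> x \<and> x \<le> r1 \<longrightarrow> isCont T x" using r0I r1 T_isCont by (auto simp: T_def)
  ultimately obtain r where "r0 \<le> r" "r \<le> r1" "T r = t"
    using IVT[of T r0 t r1] r1 by blast
  then show ?thesis using r0I r1 unfolding T_def by (intro bexI[of _ r]) auto
next
  case False
  define T where "T = Tfun M a Lam r0"
  define K where "K = rm\<^sup>2 / (2*rp)"
  have Kp: "K > 0" using rmrp rmp by (simp add: K_def)
  define E where "E = exp ((t - T r0)/K)"
  define r1 where "r1 = rm + (r0 - rm) * E"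
  have "(t - T r0)/K < 0" using False Kp by (auto simp: T_def intro!: divide_neg_pos)
  then have e1: "E \<le> 1" "E > 0" by (auto simp: E_def)
  have "(r0 - rm) * E \<le> (r0 - rm)" "(r0 - rm) * E > 0" using e1 r0I by (auto intro!: mult_left_le)
  then have r1: "r1 \<le> r0" "rm < r1" using r0I by (auto simp: r1_def)
  have "ln (r1 - rm) = ln ((r0 - rm) * E)" by (simp add: r1_def)
  also have "\<dots> = ln (r0 - rm) + ln E" using e1 r0I by (simp add: ln_mult)
  also have "\<dots> = ln (r0 - rm) + (t - T r0)/K" by (simp add: E_def)
  finally have ln1: "ln (r1 - rm) = ln (r0 - rm) + (t - T r0)/K" .
  define h where "h s = T s - K * ln (s - rm)" for s
  have "h r1 \<le> h r0"
  proof (rule DERIV_nonneg_imp_increasing_open[OF r1(1)])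
    fix x assume x: "r1 < x" "x < r0"
    then have xI: "x \<in> {rm<..<rp}" using r0I r1 by auto
    have "(h has_real_derivative (lam a Lam * (a\<^sup>2 + x\<^sup>2) / DeltaR M a Lam x - K * (1 / (x - rm)))) (at x)"
      unfolding h_def[abs_def] T_def using xI
      by (auto intro!: derivative_eq_intros T_deriv)
    moreover have "K / (x - rm) \<le> lam a Lam * (a\<^sup>2 + x\<^sup>2) / DeltaR M a Lam x"
    proof -
      have Dx: "DeltaR M a Lam x > 0" using Dpos xI by blast
      have "K / (x - rm) = rm\<^sup>2 / ((2*rp) * (x - rm))" by (simp add: K_def)
      also have "\<dots> \<le> rm\<^sup>2 / DeltaR M a Lam x"
        using D_low[OF xI] Dx by (intro divide_left_mono) auto
      also have "\<dots> \<le> lam a Lam * (a\<^sup>2 + x\<^sup>2) / DeltaR M a Lam x"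
        using lowerQ[OF xI] Dx by (intro divide_right_mono) auto
      finally show ?thesis .
    qed
    ultimately show "\<exists>y. (h has_real_derivative y) (at x) \<and> 0 \<le> y" by (intro exI[of _ "lam a Lam * (a\<^sup>2 + x\<^sup>2) / DeltaR M a Lam x - K / (x - rm)"]) auto
  next
    have "\<forall>x\<in>{r1..r0}. isCont h x"
    proof
      fix x assume "x \<in> {r1..r0}"
      then have xI: "x \<in> {rm<..<rp}" and "rm < x" using r0I r1 by auto
      then show "isCont h x" unfolding h_def[abs_def] T_def
        by (auto intro!: continuous_intros T_isCont)
    qed
    then show "continuous_on {r1..r0} h" by (rule continuous_at_imp_continuous_on)
  qed
  then have "T r1 - K * (ln (r0 - rm) + (t - T r0)/K) \<le> T r0 - K * ln (r0 - rm)" unfolding h_def ln1 .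
  moreover have "K * (ln (r0 - rm) + (t - T r0)/K) = K * ln (r0 - rm) + K * ((t - T r0)/K)"
    by (rule distrib_left)
  moreover have "K * ((t - T r0)/K) = t - T r0" using Kp by simp
  ultimately have "T r1 \<le> t" by linarith
  moreover have "t \<le> T r0" using False by (simp add: T_def)
  moreover have "\<forall>x. r1 \<le> x \<and> x \<le> r0 \<longrightarrow> isCont T x" using r0I r1 T_isCont by (auto simp: T_def)
  ultimately obtain r where "r1 \<le> r" "r \<le> r0" "T r = t"
    using IVT[where f=T and a=r1 and b=r0 and y=t] r1 by blast
  then show ?thesis using r0I r1 unfolding T_def by (intro bexI[of _ r]) auto
qed


abbreviation "tau \<equiv> tauf M a Lam rm rp r0"

lemma tau_props: "tau t \<in> {rm<..<rp} \<and> Tfun M a Lam r0 (tau t) = t"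
proof -
  obtain r where r: "r \<in> {rm<..<rp}" "Tfun M a Lam r0 r = t" using T_surj[of t] by blast
  have "\<exists>!r. r \<in> {rm<..<rp} \<and> Tfun M a Lam r0 r = t"
  proof (rule ex1I[of _ r])
    show "r \<in> {rm<..<rp} \<and> Tfun M a Lam r0 r = t" using r by simp
    fix y assume "y \<in> {rm<..<rp} \<and> Tfun M a Lam r0 y = t"
    then show "y = r" using inj_onD[OF T_inj, of y r] r by auto
  qed
  then show ?thesis unfolding tauf_def by (rule theI')
qed

lemma tau_inv: "r \<in> {rm<..<rp} \<Longrightarrow> tau (Tfun M a Lam r0 r) = r"
  using tau_props[of "Tfun M a Lam r0 r"] T_inj by (auto dest: inj_onD)

definition "dtau = Mu (Cn (1 / lam a Lam)) (Mu (Del M a Lam) IQ)"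

lemma tau_deriv: "(tau has_real_derivative ev M a Lam r0 dtau (tau t)) (at t)"
proof -
  define x where "x = tau t"
  have xI: "x \<in> {rm<..<rp}" using tau_props by (simp add: x_def)
  define d where "d = min (x - rm) (rp - x) / 2"
  have d: "d > 0" using xI by (auto simp: d_def)
  have dd: "d \<le> (x - rm)/2" "d \<le> (rp - x)/2" by (auto simp: d_def)
  have dI: "z \<in> {rm<..<rp}" if h: "\<bar>z - x\<bar> \<le> d" for z
  proof -
    have "x - z \<le> \<bar>z - x\<bar>" "z - x \<le> \<bar>z - x\<bar>" by auto
    then have "rm < z" "z < rp" using h dd xI by auto
    then show ?thesis by simp
  qed
  have "isCont tau (Tfun M a Lam r0 x)"
    by (rule isCont_inverse_function[OF d]) (auto intro: tau_inv T_isCont dI)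
  then have ct: "isCont tau t" using tau_props by (simp add: x_def)
  have D: "lam a Lam * (a\<^sup>2 + x\<^sup>2) / DeltaR M a Lam x \<noteq> 0" using T_pos_deriv[OF xI] by (metis less_irrefl)
  have "(tau has_real_derivative inverse (lam a Lam * (a\<^sup>2 + x\<^sup>2) / DeltaR M a Lam x)) (at t)"
    by (rule DERIV_inverse_function[OF _ D, where a="t - 1" and b="t + 1"])
      (use T_deriv[OF xI] tau_props ct in \<open>auto simp: x_def\<close>)
  moreover have "inverse (lam a Lam * (a\<^sup>2 + x\<^sup>2) / DeltaR M a Lam x) = ev M a Lam r0 dtau x"
    by (simp add: dtau_def ev_Del)
  ultimately show ?thesis by (simp add: x_def)
qed

definition "dsig = Mu (Cn (-1 / lam a Lam)) (Mu (Del M a Lam) IQ)"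

lemma sig_deriv: "((\<lambda>t. tau (-t)) has_real_derivative ev M a Lam r0 dsig (tau (-t))) (at t)"
proof -
  have "((\<lambda>t. tau (-t)) has_real_derivative ev M a Lam r0 dtau (tau (-t)) * (-1)) (at t)"
    by (rule DERIV_chain2[OF tau_deriv]) (auto intro!: derivative_eq_intros)
  then show ?thesis by (simp add: dtau_def dsig_def)
qed

lemma dseq_comp:
  assumes "\<And>t. \<sigma> t \<in> {rm<..<rp}" and "\<And>t. (\<sigma> has_real_derivative ev M a Lam r0 d (\<sigma> t)) (at t)"
  shows "dseq UNIV (\<lambda>n t. ev M a Lam r0 (((\<lambda>e. Mu (Dx M a Lam e) d) ^^ n) e) (\<sigma> t))"
  unfolding dseq_def
proof (intro allI ballI)
  fix n t
  show "((\<lambda>t. ev M a Lam r0 (((\<lambda>e. Mu (Dx M a Lam e) d) ^^ n) e) (\<sigma> t)) has_real_derivative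
     ev M a Lam r0 (((\<lambda>e. Mu (Dx M a Lam e) d) ^^ Suc n) e) (\<sigma> t)) (at t)"
    using DERIV_chain2[OF ev_deriv[OF assms(1)] assms(2), of "((\<lambda>e. Mu (Dx M a Lam e) d) ^^ n) e" t]
    by simp
qed

definition "eTm = Mu (Cn (- lam a Lam)) (Mu (Ad (Cn (a\<^sup>2)) (Mu Vr Vr)) ID)"
definition "eTp = Mu (Cn (lam a Lam)) (Mu (Ad (Cn (a\<^sup>2)) (Mu Vr Vr)) ID)"

lemma Fplus_PC: "PC {rm<..<rp} (Fplus M a Lam r0)"
  unfolding PC_def
proof (intro exI conjI allI)
  show "dseq {rm<..<rp} (\<lambda>n. case n of 0 \<Rightarrow> (\<lambda>r. - Tfun M a Lam r0 r) | Suc m \<Rightarrow> ev M a Lam r0 ((Dx M a Lam ^^ m) eTm))"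
    unfolding dseq_def
  proof (intro allI ballI)
    fix n x assume x: "x \<in> {rm<..<rp}"
    show "((case n of 0 \<Rightarrow> (\<lambda>r. - Tfun M a Lam r0 r) | Suc m \<Rightarrow> ev M a Lam r0 ((Dx M a Lam ^^ m) eTm)) has_real_derivative
      (case Suc n of 0 \<Rightarrow> (\<lambda>r. - Tfun M a Lam r0 r) | Suc m \<Rightarrow> ev M a Lam r0 ((Dx M a Lam ^^ m) eTm)) x) (at x)"
    proof (cases n)
      case 0
      have "((\<lambda>r. - Tfun M a Lam r0 r) has_real_derivative - (lam a Lam * (a\<^sup>2 + x\<^sup>2) / DeltaR M a Lam x)) (at x)"
        by (rule DERIV_minus[OF T_deriv[OF x]])
      then show ?thesis using 0 by (simp add: eTm_def power2_eq_square)
    next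
      case (Suc m)
      then show ?thesis using ev_deriv[OF x, of "(Dx M a Lam ^^ m) eTm"] by simp
    qed
  qed
  show "dseq {rm<..<rp} (\<lambda>n x. 0)" for k :: 3 by (rule dseq_zero)
  show "dseq {rm<..<rp} (\<lambda>n. ev M a Lam r0 ((Dx M a Lam ^^ n) (entM k j)))" for k j by (rule dseq_ev)
  show "\<forall>x\<in>{rm<..<rp} \<times> UNIV. Fplus M a Lam r0 x =
    frm ((\<lambda>n. case n of 0 \<Rightarrow> (\<lambda>r. - Tfun M a Lam r0 r) | Suc m \<Rightarrow> ev M a Lam r0 ((Dx M a Lam ^^ m) eTm)) 0)
       (\<lambda>k. (\<lambda>n x. 0) 0) (\<lambda>k j. ev M a Lam r0 ((Dx M a Lam ^^ 0) (entM k j))) x"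
    by (simp add: Fplus_def frm_def rotz_entM)
qed

lemma Fminus_PC: "PC {rm<..<rp} (Fminus M a Lam r0)"
  unfolding PC_def
proof (intro exI conjI allI)
  show "dseq {rm<..<rp} (\<lambda>n. case n of 0 \<Rightarrow> (\<lambda>r. Tfun M a Lam r0 r) | Suc m \<Rightarrow> ev M a Lam r0 ((Dx M a Lam ^^ m) eTp))"
    unfolding dseq_def
  proof (intro allI ballI)
    fix n x assume x: "x \<in> {rm<..<rp}"
    show "((case n of 0 \<Rightarrow> (\<lambda>r. Tfun M a Lam r0 r) | Suc m \<Rightarrow> ev M a Lam r0 ((Dx M a Lam ^^ m) eTp)) has_real_derivative
      (case Suc n of 0 \<Rightarrow> (\<lambda>r. Tfun M a Lam r0 r) | Suc m \<Rightarrow> ev M a Lam r0 ((Dx M a Lam ^^ m) eTp)) x) (at x)"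
    proof (cases n)
      case 0
      have "((\<lambda>r. Tfun M a Lam r0 r) has_real_derivative (lam a Lam * (a\<^sup>2 + x\<^sup>2) / DeltaR M a Lam x)) (at x)"
        using T_deriv[OF x] by simp
      then show ?thesis using 0 by (simp add: eTp_def power2_eq_square)
    next
      case (Suc m)
      then show ?thesis using ev_deriv[OF x, of "(Dx M a Lam ^^ m) eTp"] by simp
    qed
  qed
  show "dseq {rm<..<rp} (\<lambda>n x. 0)" for k :: 3 by (rule dseq_zero)
  show "dseq {rm<..<rp} (\<lambda>n. ev M a Lam r0 ((Dx M a Lam ^^ n) (entP k j)))" for k j by (rule dseq_ev)
  show "\<forall>x\<in>{rm<..<rp} \<times> UNIV. Fminus M a Lam r0 x =
    frm ((\<lambda>n. case n of 0 \<Rightarrow> (\<lambda>r. Tfun M a Lam r0 r) | Suc m \<Rightarrow> ev M a Lam r0 ((Dx M a Lam ^^ m) eTp)) 0)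
       (\<lambda>k. (\<lambda>n x. 0) 0) (\<lambda>k j. ev M a Lam r0 ((Dx M a Lam ^^ 0) (entP k j))) x"
    by (simp add: Fminus_def frm_def rotz_entP)
qed

definition "Gplus p = (tau (- fst p), rotz (Afun M a Lam r0 (tau (- fst p))) (snd p))"
definition "Gminus p = (tau (fst p), rotz (- Afun M a Lam r0 (tau (fst p))) (snd p))"

lemma Gplus_PC: "PC UNIV Gplus"
  unfolding PC_def
proof (intro exI conjI allI)
  let ?E = "(\<lambda>e. Mu (Dx M a Lam e) dsig)"
  show "dseq UNIV (\<lambda>n t. ev M a Lam r0 ((?E ^^ n) Vr) (tau (-t)))"
    by (rule dseq_comp) (use tau_props sig_deriv in auto)
  show "dseq UNIV (\<lambda>n x. 0)" for k :: 3 by (rule dseq_zero)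
  show "dseq UNIV (\<lambda>n t. ev M a Lam r0 ((?E ^^ n) (entP k j)) (tau (-t)))" for k j
    by (rule dseq_comp) (use tau_props sig_deriv in auto)
  show "\<forall>x\<in>UNIV \<times> UNIV. Gplus x =
    frm ((\<lambda>n t. ev M a Lam r0 ((?E ^^ n) Vr) (tau (-t))) 0)
       (\<lambda>k. (\<lambda>n x. 0) 0) (\<lambda>k j. (\<lambda>n t. ev M a Lam r0 ((?E ^^ n) (entP k j)) (tau (-t))) 0) x"
    by (simp add: Gplus_def frm_def rotz_entP)
qed

lemma Gminus_PC: "PC UNIV Gminus"
  unfolding PC_def
proof (intro exI conjI allI)
  let ?E = "(\<lambda>e. Mu (Dx M a Lam e) dtau)"
  show "dseq UNIV (\<lambda>n t. ev M a Lam r0 ((?E ^^ n) Vr) (tau t))"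
    by (rule dseq_comp) (use tau_props tau_deriv in auto)
  show "dseq UNIV (\<lambda>n x. 0)" for k :: 3 by (rule dseq_zero)
  show "dseq UNIV (\<lambda>n t. ev M a Lam r0 ((?E ^^ n) (entM k j)) (tau t))" for k j
    by (rule dseq_comp) (use tau_props tau_deriv in auto)
  show "\<forall>x\<in>UNIV \<times> UNIV. Gminus x =
    frm ((\<lambda>n t. ev M a Lam r0 ((?E ^^ n) Vr) (tau t)) 0)
       (\<lambda>k. (\<lambda>n x. 0) 0) (\<lambda>k j. (\<lambda>n t. ev M a Lam r0 ((?E ^^ n) (entM k j)) (tau t)) 0) x"
    by (simp add: Gminus_def frm_def rotz_entM)
qed


lemma S2_rotz: "rotz \<alpha> x \<in> S2 \<longleftrightarrow> x \<in> S2"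
  by (simp add: rotz_norm)

lemma Fplus_diffeo: "diffeomorphism_betw (Sigma0 rm rp) Horizon (Fplus M a Lam r0)"
proof -
  let ?F = "Fplus M a Lam r0"
  have inj: "inj_on ?F (Sigma0 rm rp)"
  proof (rule inj_onI)
    fix p q assume p: "p \<in> Sigma0 rm rp" and q: "q \<in> Sigma0 rm rp" and e: "?F p = ?F q"
    obtain r \<omega> where pe: "p = (r, \<omega>)" by (cases p)
    obtain r' \<omega>' where qe: "q = (r', \<omega>')" by (cases q)
    have "Tfun M a Lam r0 r = Tfun M a Lam r0 r'" using e by (simp add: pe qe Fplus_def)
    then have rr: "r = r'" using p q inj_onD[OF T_inj] by (auto simp: pe qe Sigma0_def)
    have "rotz (- Afun M a Lam r0 r) \<omega> = rotz (- Afun M a Lam r0 r) \<omega>'" using e by (simp add: pe qe Fplus_def rr)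
    then have "rotz (Afun M a Lam r0 r) (rotz (- Afun M a Lam r0 r) \<omega>) = rotz (Afun M a Lam r0 r) (rotz (- Afun M a Lam r0 r) \<omega>')"
      by simp
    then have "\<omega> = \<omega>'" by (simp only: rotz_inv1)
    then show "p = q" using pe qe rr by simp
  qed
  have Gmem: "Gplus y \<in> Sigma0 rm rp" if "y \<in> Horizon" for y
    using that tau_props by (auto simp: Gplus_def Sigma0_def Horizon_def rotz_norm)
  have FG: "?F (Gplus y) = y" for y
    using tau_props[of "- fst y"] by (simp add: Gplus_def Fplus_def rotz_inv2)
  have img: "?F ` Sigma0 rm rp = Horizon"
  proof
    show "?F ` Sigma0 rm rp \<subseteq> Horizon"
      by (auto simp: Fplus_def Sigma0_def Horizon_def rotz_norm)
    show "Horizon \<subseteq> ?F ` Sigma0 rm rp"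
    proof
      fix y assume "y \<in> Horizon"
      then show "y \<in> ?F ` Sigma0 rm rp" using Gmem FG by (metis image_eqI)
    qed
  qed
  have inv: "\<forall>y\<in>Horizon. Gplus y = inv_into (Sigma0 rm rp) ?F y"
    using inv_into_f_eq[OF inj Gmem FG] by auto
  have s1: "smooth_map_on (Sigma0 rm rp) ?F"
    by (rule PC_smooth_map[OF _ Fplus_PC]) (auto simp: Sigma0_def)
  have s2: "smooth_map_on Horizon (inv_into (Sigma0 rm rp) ?F)"
    by (rule PC_smooth_map[OF _ Gplus_PC _ inv]) auto
  show ?thesis unfolding diffeomorphism_betw_def bij_betw_def using inj img s1 s2 by blast
qed

lemma Fminus_diffeo: "diffeomorphism_betw (Sigma0 rm rp) Horizon (Fminus M a Lam r0)"
proof -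
  let ?F = "Fminus M a Lam r0"
  have inj: "inj_on ?F (Sigma0 rm rp)"
  proof (rule inj_onI)
    fix p q assume p: "p \<in> Sigma0 rm rp" and q: "q \<in> Sigma0 rm rp" and e: "?F p = ?F q"
    obtain r \<omega> where pe: "p = (r, \<omega>)" by (cases p)
    obtain r' \<omega>' where qe: "q = (r', \<omega>')" by (cases q)
    have "Tfun M a Lam r0 r = Tfun M a Lam r0 r'" using e by (simp add: pe qe Fminus_def)
    then have rr: "r = r'" using p q inj_onD[OF T_inj] by (auto simp: pe qe Sigma0_def)
    have "rotz (Afun M a Lam r0 r) \<omega> = rotz (Afun M a Lam r0 r) \<omega>'" using e by (simp add: pe qe Fminus_def rr)
    then have "rotz (- Afun M a Lam r0 r) (rotz (Afun M a Lam r0 r) \<omega>) = rotz (- Afun M a Lam r0 r) (rotz (Afun M a Lam r0 r) \<omega>')"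
      by simp
    then have "\<omega> = \<omega>'" by (simp only: rotz_inv2)
    then show "p = q" using pe qe rr by simp
  qed
  have Gmem: "Gminus y \<in> Sigma0 rm rp" if "y \<in> Horizon" for y
    using that tau_props by (auto simp: Gminus_def Sigma0_def Horizon_def rotz_norm)
  have FG: "?F (Gminus y) = y" for y
    using tau_props[of "fst y"] by (simp add: Gminus_def Fminus_def rotz_inv1)
  have img: "?F ` Sigma0 rm rp = Horizon"
  proof
    show "?F ` Sigma0 rm rp \<subseteq> Horizon"
      by (auto simp: Fminus_def Sigma0_def Horizon_def rotz_norm)
    show "Horizon \<subseteq> ?F ` Sigma0 rm rp"
    proof
      fix y assume "y \<in> Horizon"
      then show "y \<in> ?F ` Sigma0 rm rp" using Gmem FG by (metis image_eqI)
    qed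
  qed
  have inv: "\<forall>y\<in>Horizon. Gminus y = inv_into (Sigma0 rm rp) ?F y"
    using inv_into_f_eq[OF inj Gmem FG] by auto
  have s1: "smooth_map_on (Sigma0 rm rp) ?F"
    by (rule PC_smooth_map[OF _ Fminus_PC]) (auto simp: Sigma0_def)
  have s2: "smooth_map_on Horizon (inv_into (Sigma0 rm rp) ?F)"
    by (rule PC_smooth_map[OF _ Gminus_PC _ inv]) auto
  show ?thesis unfolding diffeomorphism_betw_def bij_betw_def using inj img s1 s2 by blast
qed

end

theorem mainTheorem15:
  fixes M a Lam rm rp r0 :: real
  assumes "Lam > 0" and "M > 0"
    and "0 < rm" and "rm < rp"
    and "DeltaR M a Lam rm = 0" and "DeltaR M a Lam rp = 0"
    and "\<forall>r\<in>{rm<..<rp}. DeltaR M a Lam r > 0"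
    and "r0 \<in> {rm<..<rp}"
  shows "diffeomorphism_betw (Sigma0 rm rp) Horizon (Fplus M a Lam r0)
       \<and> diffeomorphism_betw (Sigma0 rm rp) Horizon (Fminus M a Lam r0)"
  using Fplus_diffeo[OF assms] Fminus_diffeo[OF assms] by blast

end
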